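(* Let $n\geq 3$ and let $T$ be the $n\times n$ symmetric tridiagonal matrix with diagonal entries $T_{ii}=a_i\geq 0$ ($1\le i\le n$), off-diagonal entries $T_{j,j+1}=T_{j+1,j}=b_j\geq 0$ ($1\le j\le n-1$), and all other entries zero. Then $T$ is infinitely divisible if and only if $T$ is positive semidefinite and $b_ib_{i+1}=0$ for every $i\in\{1,2,\ldots,n-2\}$.
   Context: For a nonnegative matrix $A=[a_{ij}]$ and $r>0$, the Hadamard power is $A^{\circ r}=[a_{ij}^r]$. A nonnegative symmetric matrix $A$ is infinitely divisible if $A^{\circ r}$ is positive semidefinite for every $r>0$. *)

theory Defs
  imports "HOL-Analysis.Analysis"
begin

text \<open>Real n x n matrices are represented as functions nat => nat => real,
  with indices ranging over 1..n (entries outside are irrelevant).\<close>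

definition psd :: "nat \<Rightarrow> (nat \<Rightarrow> nat \<Rightarrow> real) \<Rightarrow> bool" where
  "psd n A \<longleftrightarrow> (\<forall>i\<in>{1..n}. \<forall>j\<in>{1..n}. A i j = A j i) \<and>
     (\<forall>x :: nat \<Rightarrow> real. 0 \<le> (\<Sum>i=1..n. \<Sum>j=1..n. x i * A i j * x j))"

definition hadamard_pow :: "real \<Rightarrow> (nat \<Rightarrow> nat \<Rightarrow> real) \<Rightarrow> (nat \<Rightarrow> nat \<Rightarrow> real)" where
  "hadamard_pow r A = (\<lambda>i j. A i j powr r)"

definition infinitely_divisible :: "nat \<Rightarrow> (nat \<Rightarrow> nat \<Rightarrow> real) \<Rightarrow> bool" where
  "infinitely_divisible n A \<longleftrightarrow>
     (\<forall>i\<in>{1..n}. \<forall>j\<in>{1..n}. 0 \<le> A i j \<and> A i j = A j i) \<and>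
     (\<forall>r::real. r > 0 \<longrightarrow> psd n (hadamard_pow r A))"

definition tridiag :: "(nat \<Rightarrow> real) \<Rightarrow> (nat \<Rightarrow> real) \<Rightarrow> (nat \<Rightarrow> nat \<Rightarrow> real)" where
  "tridiag a b = (\<lambda>i j. if i = j then a i else if j = i + 1 then b i
                        else if i = j + 1 then b j else 0)"

end

theory Submission
  imports Defs
begin


definition QF :: "(nat \<Rightarrow> real) \<Rightarrow> (nat \<Rightarrow> real) \<Rightarrow> (nat \<Rightarrow> real) \<Rightarrow> nat \<Rightarrow> real" where
  "QF c d x n = (\<Sum>i=1..n. c i * (x i)^2) + 2 * (\<Sum>j\<in>{1..<n}. d j * x j * x (Suc j))"

lemma QF_Suc: "QF c d x (Suc n) = QF c d x n + c (Suc n) * (x (Suc n))^2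
   + (if n \<ge> 1 then 2 * d n * x n * x (Suc n) else 0)"
  unfolding QF_def by (simp add: sum.cl_ivl_Suc sum.atLeastLessThan_Suc algebra_simps)

lemma qf_tridiag: "(\<Sum>i=1..n. \<Sum>j=1..n. x i * tridiag c d i j * x j) = QF c d x n"
proof (induction n)
  case 0
  then show ?case by (simp add: QF_def)
next
  case (Suc n)
  have A: "(\<Sum>i=1..n. x i * tridiag c d i (Suc n) * x (Suc n))
      = (\<Sum>i\<in>{1..n}. if i = n then d n * x n * x (Suc n) else 0)"
    by (rule sum.cong) (auto simp: tridiag_def)
  have B: "(\<Sum>j=1..n. x (Suc n) * tridiag c d (Suc n) j * x j)
      = (\<Sum>i\<in>{1..n}. if i = n then d n * x n * x (Suc n) else 0)"
    by (rule sum.cong) (auto simp: tridiag_def)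
  have "(\<Sum>i=1..Suc n. \<Sum>j=1..Suc n. x i * tridiag c d i j * x j)
     = (\<Sum>i=1..n. \<Sum>j=1..n. x i * tridiag c d i j * x j)
       + (\<Sum>i=1..n. x i * tridiag c d i (Suc n) * x (Suc n))
       + (\<Sum>j=1..n. x (Suc n) * tridiag c d (Suc n) j * x j)
       + x (Suc n) * tridiag c d (Suc n) (Suc n) * x (Suc n)"
    by (simp add: sum.cl_ivl_Suc sum.distrib)
  also have "\<dots> = QF c d x (Suc n)"
    unfolding A B Suc QF_Suc by (simp add: tridiag_def power2_eq_square)
  finally show ?case .
qed

lemma two_by_two:
  fixes c e d u v :: real
  assumes "c \<ge> 0" "e \<ge> 0" "c * e \<ge> d^2"
  shows "c * u^2 + e * v^2 + 2 * d * u * v \<ge> 0"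
proof (cases "c = 0")
  case True
  then have "d^2 \<le> 0" using assms by simp
  then have "d = 0" by (metis power2_less_eq_zero_iff)
  then show ?thesis using True assms by simp
next
  case False
  then have cpos: "c > 0" using assms by simp
  have "c * (c * u^2 + e * v^2 + 2 * d * u * v) = (c * u + d * v)^2 + (c * e - d^2) * v^2"
    by (simp add: power2_eq_square algebra_simps)
  also have "\<dots> \<ge> 0" using assms by simp
  finally show ?thesis using cpos by (simp add: zero_le_mult_iff)
qed

lemma QF_nonneg:
  assumes "\<forall>i\<in>{1..n}. c i \<ge> 0"
    and "\<forall>j. 1 \<le> j \<and> Suc j \<le> n \<longrightarrow> c j * c (Suc j) \<ge> (d j)^2"
    and "\<forall>j. 1 \<le> j \<and> Suc (Suc j) \<le> n \<longrightarrow> d j * d (Suc j) = 0"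
  shows "QF c d x n \<ge> 0"
  using assms
proof (induction n rule: less_induct)
  case (less n)
  show ?case
  proof (cases n)
    case 0
    then show ?thesis by (simp add: QF_def)
  next
    case (Suc m)
    show ?thesis
    proof (cases "m \<ge> 1 \<and> d m \<noteq> 0")
      case False
      have "QF c d x m \<ge> 0" using less.IH[of m] less.prems Suc by auto
      moreover have "c (Suc m) \<ge> 0" using less.prems Suc by auto
      ultimately show ?thesis using False Suc by (auto simp: QF_Suc)
    next
      case True
      then obtain k where k: "m = Suc k" by (cases m) auto
      have "QF c d x k \<ge> 0" using less.IH[of k] less.prems Suc k by auto
      have dk: "k \<ge> 1 \<Longrightarrow> d k = 0" using less.prems(3) Suc k True by auto
      have "c m * (x m)^2 + c (Suc m) * (x (Suc m))^2 + 2 * d m * x m * x (Suc m) \<ge> 0"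
        apply (rule two_by_two) using less.prems Suc True by auto
      then show ?thesis using dk \<open>QF c d x k \<ge> 0\<close> Suc k by (auto simp: QF_Suc)
    qed
  qed
qed



lemma tridiag_sym: "tridiag c d i j = tridiag c d j i"
  by (auto simp: tridiag_def)

lemma psd_tridiag: "psd n (tridiag c d) \<longleftrightarrow> (\<forall>x. QF c d x n \<ge> 0)"
  unfolding psd_def qf_tridiag using tridiag_sym by auto

lemma hp_tridiag: "hadamard_pow r (tridiag a b) = tridiag (\<lambda>i. a i powr r) (\<lambda>i. b i powr r)"
  by (auto simp: hadamard_pow_def tridiag_def fun_eq_iff)

lemma QF_two:
  assumes "1 \<le> j" "Suc j \<le> n"
  shows "QF c d (\<lambda>i. if i = j then u else if i = Suc j then v else 0) n
     = c j * u^2 + c (Suc j) * v^2 + 2 * d j * u * v"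
proof -
  let ?x = "\<lambda>i. if i = j then u else if i = Suc j then v else 0"
  have 1: "(\<Sum>i=1..n. c i * (?x i)^2) = (\<Sum>i=1..n. (if i = j then c j * u^2 else 0) + (if i = Suc j then c (Suc j) * v^2 else 0))"
    by (rule sum.cong) auto
  have 2: "(\<Sum>i\<in>{1..<n}. d i * ?x i * ?x (Suc i)) = (\<Sum>i\<in>{1..<n}. if i = j then d j * u * v else 0)"
    by (rule sum.cong) auto
  have 3: "(\<Sum>i=1..n. (if i = j then c j * u^2 else 0) + (if i = Suc j then c (Suc j) * v^2 else 0)) = c j * u^2 + c (Suc j) * v^2"
    using assms by (simp only: sum.distrib sum.delta finite_atLeastAtMost) simp
  have 4: "(\<Sum>i\<in>{1..<n}. if i = j then d j * u * v else 0) = d j * u * v"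
    using assms by (simp only: sum.delta finite_atLeastLessThan) simp
  show ?thesis by (simp only: QF_def 1 2 3 4)
qed

lemma QF_three:
  assumes "1 \<le> j" "Suc (Suc j) \<le> n"
  shows "QF c d (\<lambda>i. if i = j then 1 else if i = Suc j then -1 else if i = Suc (Suc j) then 1 else 0) n
     = c j + c (Suc j) + c (Suc (Suc j)) - 2 * d j - 2 * d (Suc j)"
proof -
  let ?x = "\<lambda>i. if i = j then 1 else if i = Suc j then -1 else if i = Suc (Suc j) then 1 else (0::real)"
  have 1: "(\<Sum>i=1..n. c i * (?x i)^2) = (\<Sum>i=1..n. (if i = j then c j else 0) + (if i = Suc j then c (Suc j) else 0) + (if i = Suc (Suc j) then c (Suc (Suc j)) else 0))"
    by (rule sum.cong) auto
  have 2: "(\<Sum>i\<in>{1..<n}. d i * ?x i * ?x (Suc i)) = (\<Sum>i\<in>{1..<n}. (if i = j then - d j else 0) + (if i = Suc j then - d (Suc j) else 0))"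
    by (rule sum.cong) auto
  have 3: "(\<Sum>i=1..n. (if i = j then c j else 0) + (if i = Suc j then c (Suc j) else 0) + (if i = Suc (Suc j) then c (Suc (Suc j)) else 0)) = c j + c (Suc j) + c (Suc (Suc j))"
    using assms by (simp only: sum.distrib sum.delta finite_atLeastAtMost) simp
  have 4: "(\<Sum>i\<in>{1..<n}. (if i = j then - d j else 0) + (if i = Suc j then - d (Suc j) else 0)) = - d j - d (Suc j)"
    using assms by (simp only: sum.distrib sum.delta finite_atLeastLessThan) simp
  show ?thesis proof -
    have "QF c d ?x n = c j + c (Suc j) + c (Suc (Suc j)) + 2 * (- d j - d (Suc j))" by (simp only: QF_def 1 2 3 4)
    then show ?thesis by (simp add: algebra_simps)
  qed
qed


lemma psd_minor:
  assumes "psd n (tridiag c d)" "1 \<le> j" "Suc j \<le> n" "c j \<ge> 0" "c (Suc j) \<ge> 0"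
  shows "c j * c (Suc j) \<ge> (d j)^2"
proof -
  have all: "\<forall>x. QF c d x n \<ge> 0" using assms(1) psd_tridiag by blast
  have H: "c j * u^2 + c (Suc j) * v^2 + 2 * d j * u * v \<ge> 0" for u v
  proof -
    have "QF c d (\<lambda>i. if i = j then u else if i = Suc j then v else 0) n \<ge> 0" using all by blast
    then show ?thesis by (simp only: QF_two[OF assms(2,3)])
  qed
  show ?thesis
  proof (cases "c j = 0")
    case True
    have "c (Suc j) * (d j)^2 + 2 * d j * (-(c (Suc j) + 2)) * d j \<ge> 0"
      using H[of "-(c (Suc j) + 2)" "d j"] True by simp
    then have "(c (Suc j) + 4) * (d j)^2 \<le> (c (Suc j) + 4) * 0" by (simp add: power2_eq_square algebra_simps)
    moreover have "c (Suc j) + 4 > 0" using assms by simp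
    ultimately have "(d j)^2 \<le> 0" using mult_le_cancel_left_pos by blast
    then show ?thesis using True by simp
  next
    case False
    have "c j * (d j)^2 + c (Suc j) * (- c j)^2 + 2 * d j * d j * (- c j) \<ge> 0"
      using H[of "d j" "- c j"] by simp
    then have "c j * (c j * c (Suc j) - (d j)^2) \<ge> 0" by (simp add: power2_eq_square algebra_simps)
    moreover have "c j > 0" using False assms by simp
    ultimately show ?thesis by (simp add: zero_le_mult_iff)
  qed
qed


lemma small_r:
  fixes p q s u v :: real
  assumes "p \<ge> 0" "q \<ge> 0" "s \<ge> 0" "u > 0" "v > 0"
  shows "\<exists>r>0. p powr r + q powr r + s powr r - 2 * u powr r - 2 * v powr r < 0"
proof -
  define A where "A = max 1 (max p (max q s))"
  have A1: "A \<ge> 1" unfolding A_def by simp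
  have lim: "((\<lambda>r. 3 * A powr r - 2 * u powr r - 2 * v powr r) \<longlongrightarrow> 3 * A powr 0 - 2 * u powr 0 - 2 * v powr 0) (at_right 0)"
    using A1 assms by (intro tendsto_intros) auto
  have "3 * A powr 0 - 2 * u powr 0 - 2 * v powr 0 = (-1::real)" using A1 assms by simp
  with lim have "\<forall>\<^sub>F r in at_right 0. 3 * A powr r - 2 * u powr r - 2 * v powr r < 0"
    by (auto dest: order_tendstoD(2)[where a = 0])
  then obtain b where b: "b > 0" "\<And>r. r > 0 \<Longrightarrow> r < b \<Longrightarrow> 3 * A powr r - 2 * u powr r - 2 * v powr r < 0"
    unfolding eventually_at_right_field by auto
  define r where "r = b / 2"
  have r: "r > 0" "r < b" using b unfolding r_def by auto
  have "p powr r \<le> A powr r" "q powr r \<le> A powr r" "s powr r \<le> A powr r"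
    using assms r by (auto intro!: powr_mono2 simp: A_def)
  then have "p powr r + q powr r + s powr r - 2 * u powr r - 2 * v powr r
      \<le> 3 * A powr r - 2 * u powr r - 2 * v powr r" by simp
  also have "\<dots> < 0" using b(2) r by blast
  finally show ?thesis using r by blast
qed

lemma QF_cong:
  assumes "\<forall>i\<in>{1..n}. c i = c' i" "\<forall>j\<in>{1..<n}. d j = d' j"
  shows "QF c d x n = QF c' d' x n"
  unfolding QF_def using assms by (auto intro!: sum.cong arg_cong2[where f="(+)"])

theorem theorem1p4:
  fixes n :: nat and a b :: "nat \<Rightarrow> real"
  assumes "n \<ge> 3"
    and "\<forall>i\<in>{1..n}. a i \<ge> 0"
    and "\<forall>j\<in>{1..n-1}. b j \<ge> 0"
  shows "infinitely_divisible n (tridiag a b) \<longleftrightarrow>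
           psd n (tridiag a b) \<and> (\<forall>i\<in>{1..n-2}. b i * b (i + 1) = 0)"
proof
  assume ID: "infinitely_divisible n (tridiag a b)"
  have P: "\<And>r. r > 0 \<Longrightarrow> \<forall>x. QF (\<lambda>i. a i powr r) (\<lambda>i. b i powr r) x n \<ge> 0"
    using ID unfolding infinitely_divisible_def hp_tridiag psd_tridiag by blast
  have "psd n (tridiag a b)"
    unfolding psd_tridiag
  proof
    fix x
    have "QF (\<lambda>i. a i powr 1) (\<lambda>i. b i powr 1) x n = QF a b x n"
      using assms by (intro QF_cong) auto
    then show "QF a b x n \<ge> 0" using P[of 1] by (metis zero_less_one)
  qed
  moreover have "\<forall>i\<in>{1..n-2}. b i * b (i + 1) = 0"
  proof (rule ccontr)
    assume "\<not> ?thesis"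
    then obtain j where j: "j \<in> {1..n-2}" "b j * b (j+1) \<noteq> 0" by auto
    have "b j > 0" "b (Suc j) > 0" using j assms(3) by (auto simp: less_le)
    moreover have "a j \<ge> 0" "a (Suc j) \<ge> 0" "a (Suc (Suc j)) \<ge> 0" using j assms(2) by auto
    ultimately obtain r where r: "r > 0" "a j powr r + a (Suc j) powr r + a (Suc (Suc j)) powr r
        - 2 * b j powr r - 2 * b (Suc j) powr r < 0"
      using small_r by blast
    have "1 \<le> j" "Suc (Suc j) \<le> n" using j by auto
    note e = QF_three[OF this, of "\<lambda>i. a i powr r" "\<lambda>i. b i powr r"]
    have "0 \<le> QF (\<lambda>i. a i powr r) (\<lambda>i. b i powr r)
       (\<lambda>i. if i = j then 1 else if i = Suc j then - 1 else if i = Suc (Suc j) then 1 else 0) n"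
      using P[OF r(1)] by blast
    with e r(2) show False by linarith
  qed
  ultimately show "psd n (tridiag a b) \<and> (\<forall>i\<in>{1..n-2}. b i * b (i + 1) = 0)" by blast
next
  assume R: "psd n (tridiag a b) \<and> (\<forall>i\<in>{1..n-2}. b i * b (i + 1) = 0)"
  have ent: "\<forall>i\<in>{1..n}. \<forall>j\<in>{1..n}. 0 \<le> tridiag a b i j \<and> tridiag a b i j = tridiag a b j i"
    using assms(2,3) by (auto simp: tridiag_def)
  have "psd n (hadamard_pow r (tridiag a b))" if "r > 0" for r
    unfolding hp_tridiag psd_tridiag
  proof
    fix x
    show "QF (\<lambda>i. a i powr r) (\<lambda>i. b i powr r) x n \<ge> 0"
    proof (rule QF_nonneg)
      show "\<forall>i\<in>{1..n}. 0 \<le> a i powr r" by simp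
      show "\<forall>j. 1 \<le> j \<and> Suc j \<le> n \<longrightarrow> (b j powr r)^2 \<le> a j powr r * a (Suc j) powr r"
      proof (intro allI impI)
        fix j assume j: "1 \<le> j \<and> Suc j \<le> n"
        have m: "(b j)^2 \<le> a j * a (Suc j)"
          using psd_minor[of n a b j] R j assms(2) by auto
        have bj: "b j \<ge> 0" using j assms(3) by auto
        have "(b j powr r)^2 = (b j * b j) powr r"
          using bj by (simp add: powr_mult power2_eq_square)
        also have "\<dots> \<le> (a j * a (Suc j)) powr r"
          using m that by (intro powr_mono2) (auto simp: power2_eq_square)
        also have "\<dots> = a j powr r * a (Suc j) powr r"
          using j assms(2) by (auto intro!: powr_mult)
        finally show "(b j powr r)^2 \<le> a j powr r * a (Suc j) powr r" .
      qed
      show "\<forall>j. 1 \<le> j \<and> Suc (Suc j) \<le> n \<longrightarrow> b j powr r * b (Suc j) powr r = 0"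
      proof (intro allI impI)
        fix j assume j: "1 \<le> j \<and> Suc (Suc j) \<le> n"
        then have "b j * b (Suc j) = 0" using R by auto
        then show "b j powr r * b (Suc j) powr r = 0" by auto
      qed
    qed
  qed
  then show "infinitely_divisible n (tridiag a b)"
    unfolding infinitely_divisible_def using ent by blast
qed

end
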